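(* Consider the Decaying-$\epsilon$-FOCuS procedure (described in the context) on $M>1$ streams, where stream 1 has a change-point at $\nu=0$ (every observation of stream 1 is $\mathcal{N}(\mu_1,1)$ with $\mu_1\ne0$, all other observations $\mathcal{N}(0,1)$). Then for every $t\ge M^3+1$, $$\mathbb{P}_{M,0}\left(T_t^{(1)}<\frac{\mu_1^2t^{2/3}}{8},\ N_t^{(1)}\le\frac{t^{2/3}}{2}\right)\le\exp\left(-2\left(t^{1/6}-\frac{1}{\sqrt t}\left(\frac{3(M^3+1)^{2/3}}{2}-M^2\right)\right)^2\right),$$ and for $t=0$ this probability is $0$.
   Context: Setting: there are $M$ independent data streams. At each time $t=1,2,\dots$ an agent selects one stream $A_t\in\{1,\dots,M\}$ and observes one value $X_t\in\mathbb{R}$ from it. The $i$-th observation taken from stream $m$ is denoted $X_i^{(m)}$. Pre-change observations are $\mathcal{N}(0,1)$. Stream 1 has a change-point $\nu$: if $A_t=1$ and $t>\nu$ then $X_t\sim\mathcal{N}(\mu_1,1)$ with $\mu_1\neq0$; otherwise $X_t\sim\mathcal{N}(0,1)$; observations are conditionally independent given the selections. $\mathbb{P}_{M,\nu}$ denotes probability for $M$ streams with change at $\nu$ in stream 1. $\mathcal{F}_t=\sigma(A_1,X_1,\dots,A_t,X_t)$. The sampling process and statistics are defined for all $t\ge 0$. Decaying-$\epsilon$-FOCuS: let $N_t^{(m)}$ be the number of times stream $m$ was selected up to and including time $t$. The local GLR statistic is $T_t^{(m)}=\max_{0\le k<N_t^{(m)}}\frac{(\sum_{i=k+1}^{N_t^{(m)}}X_i^{(m)})^2}{2(N_t^{(m)}-k)}$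 (and $T_t^{(m)}=0$ if $N_t^{(m)}=0$); $M_t=\arg\max_m T_t^{(m)}$. The local change-point estimate $\hat\nu_t^{(m)}$ is the time at which stream $m$'s $\hat k$-th observation was taken, where $\hat k$ is the maximizing index $k$ in $T_t^{(m)}$ (time $0$ if $\hat k=0$ or $N_t^{(m)}=0$); the global estimate is $\hat\nu_t=\hat\nu_t^{(M_t)}$; ties are broken uniformly at random. Initially $\hat\nu_0=0$, $M_0$ uniform on $[M]$. At time $t$, set $\epsilon_t=\min\{1, M/\max(1,t-\hat\nu_{t-1})^{1/3}\}$, draw $G_t\sim\mathrm{Bernoulli}(\epsilon_t)$ (conditionally on $\mathcal{F}_{t-1}$); if $G_t=1$ choose $A_t$ uniformly from $[M]$, otherwise $A_t=M_{t-1}$; then observe $X_t$ and update the statistics. *)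

theory Defs
  imports "HOL-Probability.Probability"
begin

text \<open>Decaying-epsilon-FOCuS with M streams (indexed 1..M), change at nu = 0 in stream 1.
  Sample point: (X, U, R, VM, VK) where
  X (m,i)  = i-th observation taken from stream m (i >= 1),
  U t      = uniform [0,1) variable used to draw G_t = [U t < eps_t] (Bernoulli(eps_t)),
  R t      = uniform choice in {1..M} used when exploring at time t,
  VM t     = uniform [0,1) tie-break variable for M_t (argmax over streams),
  VK (t,m) = uniform [0,1) tie-break variable for the argmax index k of stream m at time t.\<close>

type_synonym sample = "(nat \<times> nat \<Rightarrow> real) \<times> (nat \<Rightarrow> real) \<times> (nat \<Rightarrow> nat)
                        \<times> (nat \<Rightarrow> real) \<times> (nat \<times> nat \<Rightarrow> real)"

definition gauss :: "real \<Rightarrow> real measure" where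
  "gauss mu = density lborel (normal_density mu 1)"

definition unif01 :: "real measure" where
  "unif01 = uniform_measure lborel {0..<1}"

definition focus_space :: "nat \<Rightarrow> real \<Rightarrow> sample measure" where
  "focus_space M mu =
     (PiM UNIV (\<lambda>(m, i). if m = 1 then gauss mu else gauss 0))
     \<Otimes>\<^sub>M ((PiM UNIV (\<lambda>_. unif01))
     \<Otimes>\<^sub>M ((PiM UNIV (\<lambda>_. measure_pmf (pmf_of_set {1..M})))
     \<Otimes>\<^sub>M ((PiM UNIV (\<lambda>_. unif01))
     \<Otimes>\<^sub>M (PiM UNIV (\<lambda>_. unif01)))))"

text \<open>Uniform choice from a finite nonempty set S driven by v uniform in [0,1).\<close>
definition pick :: "real \<Rightarrow> 'a::linorder set \<Rightarrow> 'a" where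
  "pick v S = sorted_list_of_set S ! nat \<lfloor>v * real (card S)\<rfloor>"

text \<open>h = list of selections A_1..A_t (so t = length h).\<close>
definition Ncount :: "nat list \<Rightarrow> nat \<Rightarrow> nat" where
  "Ncount h m = length (filter (\<lambda>a. a = m) h)"

definition seg :: "(nat \<times> nat \<Rightarrow> real) \<Rightarrow> nat \<Rightarrow> nat \<Rightarrow> nat \<Rightarrow> real" where
  "seg X m n k = (\<Sum>i\<in>{k+1..n}. X (m, i))^2 / (2 * real (n - k))"

definition Tstat :: "(nat \<times> nat \<Rightarrow> real) \<Rightarrow> nat list \<Rightarrow> nat \<Rightarrow> real" where
  "Tstat X h m = (let n = Ncount h m in
      if n = 0 then 0 else Max ((\<lambda>k. seg X m n k) ` {..<n}))"

definition khat :: "(nat \<times> nat \<Rightarrow> real) \<Rightarrow> (nat \<times> nat \<Rightarrow> real) \<Rightarrow> nat list \<Rightarrow> nat \<Rightarrow> nat" where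
  "khat X VK h m = (let n = Ncount h m in
      if n = 0 then 0
      else pick (VK (length h, m)) {k. k < n \<and> seg X m n k = Tstat X h m})"

text \<open>Time (1-based position in h) of the k-th selection of stream m; 0 if k = 0.\<close>
definition occ_time :: "nat list \<Rightarrow> nat \<Rightarrow> nat \<Rightarrow> nat" where
  "occ_time h m k = (if k = 0 then 0 else (LEAST j. Ncount (take j h) m = k))"

definition nuhat_loc :: "(nat \<times> nat \<Rightarrow> real) \<Rightarrow> (nat \<times> nat \<Rightarrow> real) \<Rightarrow> nat list \<Rightarrow> nat \<Rightarrow> nat" where
  "nuhat_loc X VK h m = occ_time h m (khat X VK h m)"

definition Mhat :: "nat \<Rightarrow> (nat \<times> nat \<Rightarrow> real) \<Rightarrow> (nat \<Rightarrow> real) \<Rightarrow> nat list \<Rightarrow> nat" where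
  "Mhat M X VM h = pick (VM (length h))
      {m \<in> {1..M}. Tstat X h m = Max (Tstat X h ` {1..M})}"

definition nuhat :: "nat \<Rightarrow> (nat \<times> nat \<Rightarrow> real) \<Rightarrow> (nat \<Rightarrow> real) \<Rightarrow> (nat \<times> nat \<Rightarrow> real)
    \<Rightarrow> nat list \<Rightarrow> nat" where
  "nuhat M X VM VK h = nuhat_loc X VK h (Mhat M X VM h)"

definition eps :: "nat \<Rightarrow> nat \<Rightarrow> nat \<Rightarrow> real" where
  "eps M t nu = min 1 (real M / (max 1 (real t - real nu)) powr (1/3))"

primrec hist :: "nat \<Rightarrow> sample \<Rightarrow> nat \<Rightarrow> nat list" where
  "hist M \<omega> 0 = []"
| "hist M \<omega> (Suc t) =
     (case \<omega> of (X, U, R, VM, VK) \<Rightarrow>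
        (let h = hist M \<omega> t;
             e = eps M (Suc t) (nuhat M X VM VK h);
             a = (if U (Suc t) < e then R (Suc t) else Mhat M X VM h)
         in h @ [a]))"

definition bad_event :: "nat \<Rightarrow> real \<Rightarrow> nat \<Rightarrow> sample set" where
  "bad_event M mu t = {\<omega> \<in> space (focus_space M mu).
      Tstat (fst \<omega>) (hist M \<omega> t) 1 < mu^2 * real t powr (2/3) / 8
    \<and> real (Ncount (hist M \<omega> t) 1) \<le> real t powr (2/3) / 2}"

end

theory Submission
  imports Defs
begin

lemma sets_gauss[measurable_cong]: "sets (gauss mu) = sets borel"
  by (simp add: gauss_def)
lemma sets_unif01[measurable_cong]: "sets unif01 = sets borel"
  by (simp add: unif01_def)

lemma space_focus: "space (focus_space M mu) = UNIV"
  unfolding focus_space_def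
  by (auto simp: space_pair_measure space_PiM gauss_def unif01_def PiE_def extensional_def)

lemma gauss_meas_conv: "f \<in> measurable N (gauss mu) \<Longrightarrow> f \<in> borel_measurable N"
  using measurable_cong_sets[OF refl sets_gauss, of N mu] by simp

lemma X_meas[measurable]: "(\<lambda>\<omega>. fst \<omega> (m,i)) \<in> borel_measurable (focus_space M mu)"
proof -
  have "(\<lambda>\<omega>. fst \<omega> (m,i)) \<in> measurable (focus_space M mu) ((\<lambda>(m, i). if m = 1 then gauss mu else gauss 0) (m,i))"
    unfolding focus_space_def
    by (rule measurable_compose[OF measurable_fst measurable_component_singleton]) simp
  then show ?thesis
    by (cases "m = 1") (auto intro: gauss_meas_conv)
qed

lemma U_meas[measurable]: "(\<lambda>\<omega>. fst (snd \<omega>) i) \<in> borel_measurable (focus_space M mu)"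
  unfolding focus_space_def by measurable

lemma R_meas[measurable]: "(\<lambda>\<omega>. fst (snd (snd \<omega>)) i) \<in> measurable (focus_space M mu) (count_space UNIV)"
  unfolding focus_space_def by measurable

lemma VM_meas[measurable]: "(\<lambda>\<omega>. fst (snd (snd (snd \<omega>))) i) \<in> borel_measurable (focus_space M mu)"
  unfolding focus_space_def by measurable

lemma VK_meas[measurable]: "(\<lambda>\<omega>. snd (snd (snd (snd \<omega>))) i) \<in> borel_measurable (focus_space M mu)"
  unfolding focus_space_def by measurable


abbreviation "Xo \<equiv> (\<lambda>\<omega>::sample. fst \<omega>)"
abbreviation "Uo \<equiv> (\<lambda>\<omega>::sample. fst (snd \<omega>))"
abbreviation "Ro \<equiv> (\<lambda>\<omega>::sample. fst (snd (snd \<omega>)))"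
abbreviation "VMo \<equiv> (\<lambda>\<omega>::sample. fst (snd (snd (snd \<omega>))))"
abbreviation "VKo \<equiv> (\<lambda>\<omega>::sample. snd (snd (snd (snd \<omega>))))"

lemma count_meas_nat_floor: 
  fixes v :: "'a \<Rightarrow> real"
  assumes [measurable]: "v \<in> borel_measurable F"
  shows "(\<lambda>\<omega>. L ! nat \<lfloor>v \<omega> * c\<rfloor>) \<in> measurable F (count_space UNIV)"
proof -
  have "(\<lambda>\<omega>. \<lfloor>v \<omega> * c\<rfloor>) \<in> measurable F (count_space UNIV)"
  proof -
    have "(\<lambda>\<omega>. v \<omega> * c) \<in> borel_measurable F" using assms by (intro borel_measurable_times) auto
    from measurable_compose[OF this measurable_real_floor] show ?thesis .
  qed
  then show ?thesis
    by (rule measurable_compose) (rule measurable_count_space)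
qed

lemma meas_pick:
  fixes S :: "sample \<Rightarrow> nat set"
  assumes A: "finite A" and sub: "\<And>\<omega>. S \<omega> \<subseteq> A"
    and P: "\<And>a. a \<in> A \<Longrightarrow> Measurable.pred F (\<lambda>\<omega>. a \<in> S \<omega>)"
    and v[measurable]: "v \<in> borel_measurable F"
  shows "(\<lambda>\<omega>. pick (v \<omega>) (S \<omega>)) \<in> measurable F (count_space UNIV)"
proof (rule measurable_compose_countable'[where f="\<lambda>T \<omega>. pick (v \<omega>) T" and I="Pow A"])
  fix T assume "T \<in> Pow A"
  show "(\<lambda>\<omega>. pick (v \<omega>) T) \<in> measurable F (count_space UNIV)"
    unfolding pick_def by (rule count_meas_nat_floor) (rule v)
next
  show "countable (Pow A)" using A by (simp add: countable_finite)
next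
  show "S \<in> measurable F (count_space (Pow A))"
  proof (subst measurable_count_space_eq2, simp add: A, intro conjI ballI)
    show "S \<in> space F \<rightarrow> Pow A" using sub by auto
    fix T assume T: "T \<in> Pow A"
    have iff: "S \<omega> = T \<longleftrightarrow> (\<forall>a\<in>A. (a \<in> S \<omega>) = (a \<in> T))" for \<omega>
    proof
      assume "\<forall>a\<in>A. (a \<in> S \<omega>) = (a \<in> T)"
      then show "S \<omega> = T" using sub[of \<omega>] T by (intro set_eqI) blast
    qed simp
    have eq: "S -` {T} \<inter> space F = {\<omega> \<in> space F. \<forall>a\<in>A. (a \<in> S \<omega>) = (a \<in> T)}"
      using iff by blast
    have PP: "Measurable.pred F (\<lambda>\<omega>. (a \<in> S \<omega>) = (a \<in> T))" if "a \<in> A" for a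
    proof (cases "a \<in> T")
      case True then show ?thesis using P[OF that] by simp
    next
      case False then show ?thesis using P[OF that] by (simp add: pred_intros_logic)
    qed
    have "Measurable.pred F (\<lambda>\<omega>. \<forall>a\<in>A. (a \<in> S \<omega>) = (a \<in> T))"
      by (rule measurable_pred_countable(1)[OF countable_finite[OF A]]) (rule PP)
    then show "S -` {T} \<inter> space F \<in> sets F" unfolding eq by (simp add: pred_def)
  qed
qed

lemma Tstat_meas[measurable]:
  "(\<lambda>\<omega>. Tstat (Xo \<omega>) h m) \<in> borel_measurable (focus_space M mu)"
  unfolding Tstat_def Let_def seg_def by measurable

lemma Mhat_meas[measurable]:
  "(\<lambda>\<omega>. Mhat M (Xo \<omega>) (VMo \<omega>) h) \<in> measurable (focus_space M mu) (count_space UNIV)"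
  unfolding Mhat_def
proof (rule meas_pick[where A="{1..M}"])
  fix a :: nat assume "a \<in> {1..M}"
  then have eq: "(\<lambda>\<omega>. a \<in> {m \<in> {1..M}. Tstat (Xo \<omega>) h m = Max (Tstat (Xo \<omega>) h ` {1..M})})
    = (\<lambda>\<omega>. Tstat (Xo \<omega>) h a = Max ((\<lambda>m. Tstat (Xo \<omega>) h m) ` {1..M}))" by auto
  show "Measurable.pred (focus_space M mu) (\<lambda>\<omega>. a \<in> {m \<in> {1..M}. Tstat (Xo \<omega>) h m = Max (Tstat (Xo \<omega>) h ` {1..M})})"
    unfolding eq by measurable
qed auto

lemma khat_meas[measurable]:
  "(\<lambda>\<omega>. khat (Xo \<omega>) (VKo \<omega>) h m) \<in> measurable (focus_space M mu) (count_space UNIV)"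
proof (cases "Ncount h m = 0")
  case True then show ?thesis unfolding khat_def Let_def by simp
next
  case False
  have "(\<lambda>\<omega>. pick (VKo \<omega> (length h, m)) {k. k < Ncount h m \<and> seg (Xo \<omega>) m (Ncount h m) k = Tstat (Xo \<omega>) h m})
     \<in> measurable (focus_space M mu) (count_space UNIV)"
  proof (rule meas_pick[where A="{..<Ncount h m}"])
    fix a :: nat assume "a \<in> {..<Ncount h m}"
    then have eq: "(\<lambda>\<omega>. a \<in> {k. k < Ncount h m \<and> seg (Xo \<omega>) m (Ncount h m) k = Tstat (Xo \<omega>) h m})
       = (\<lambda>\<omega>. seg (Xo \<omega>) m (Ncount h m) a = Tstat (Xo \<omega>) h m)" by auto
    show "Measurable.pred (focus_space M mu) (\<lambda>\<omega>. a \<in> {k. k < Ncount h m \<and> seg (Xo \<omega>) m (Ncount h m) k = Tstat (Xo \<omega>) h m})"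
      unfolding eq unfolding seg_def by measurable
  qed auto
  then show ?thesis using False unfolding khat_def Let_def by simp
qed

lemma nuhat_meas[measurable]:
  "(\<lambda>\<omega>. nuhat M (Xo \<omega>) (VMo \<omega>) (VKo \<omega>) h) \<in> measurable (focus_space M mu) (count_space UNIV)"
proof -
  have "(\<lambda>\<omega>. nuhat_loc (Xo \<omega>) (VKo \<omega>) h m) \<in> measurable (focus_space M mu) (count_space UNIV)" for m
    unfolding nuhat_loc_def
    by (rule measurable_compose[OF khat_meas]) (rule measurable_count_space)
  then show ?thesis
    unfolding nuhat_def
    by (rule measurable_compose_countable[where f="\<lambda>m \<omega>. nuhat_loc (Xo \<omega>) (VKo \<omega>) h m"]) (rule Mhat_meas)
qed

lemma hist_Suc':
  "hist M \<omega> (Suc t) = (let h = hist M \<omega> t;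
             e = eps M (Suc t) (nuhat M (Xo \<omega>) (VMo \<omega>) (VKo \<omega>) h);
             a = (if Uo \<omega> (Suc t) < e then Ro \<omega> (Suc t) else Mhat M (Xo \<omega>) (VMo \<omega>) h)
         in h @ [a])"
  by (cases \<omega>) (simp add: Let_def)

lemma hist_meas[measurable]:
  "(\<lambda>\<omega>. hist M \<omega> t) \<in> measurable (focus_space M mu) (count_space UNIV)"
proof (induction t)
  case 0
  then show ?case by simp
next
  case (Suc t)
  have step: "(\<lambda>\<omega>. h @ [if Uo \<omega> (Suc t) < eps M (Suc t) (nuhat M (Xo \<omega>) (VMo \<omega>) (VKo \<omega>) h)
      then Ro \<omega> (Suc t) else Mhat M (Xo \<omega>) (VMo \<omega>) h]) \<in> measurable (focus_space M mu) (count_space UNIV)" for h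
  proof -
    have e: "(\<lambda>\<omega>. eps M (Suc t) (nuhat M (Xo \<omega>) (VMo \<omega>) (VKo \<omega>) h)) \<in> borel_measurable (focus_space M mu)"
      by (rule measurable_compose[OF nuhat_meas]) (simp add: measurable_count_space_eq1)
    have "(\<lambda>\<omega>. if Uo \<omega> (Suc t) < eps M (Suc t) (nuhat M (Xo \<omega>) (VMo \<omega>) (VKo \<omega>) h)
      then Ro \<omega> (Suc t) else Mhat M (Xo \<omega>) (VMo \<omega>) h) \<in> measurable (focus_space M mu) (count_space UNIV)"
      by (rule measurable_If[OF R_meas Mhat_meas borel_measurable_less[OF U_meas e]])
    then show ?thesis
      by (rule measurable_compose) (rule measurable_count_space)
  qed
  show ?case
    unfolding hist_Suc' Let_def
    by (rule measurable_compose_countable[OF step Suc.IH])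
qed

lemma bad_event_sets: "bad_event M mu t \<in> sets (focus_space M mu)"
proof -
  have T: "(\<lambda>\<omega>. Tstat (Xo \<omega>) (hist M \<omega> t) 1) \<in> borel_measurable (focus_space M mu)"
    by (rule measurable_compose_countable[OF Tstat_meas hist_meas])
  have N: "(\<lambda>\<omega>. real (Ncount (hist M \<omega> t) 1)) \<in> borel_measurable (focus_space M mu)"
    by (rule measurable_compose[OF hist_meas]) (simp add: measurable_count_space_eq1)
  have c1: "(\<lambda>\<omega>::sample. mu^2 * real t powr (2/3) / 8) \<in> borel_measurable (focus_space M mu)" by simp
  have c2: "(\<lambda>\<omega>::sample. real t powr (2/3) / 2) \<in> borel_measurable (focus_space M mu)" by simp
  have "bad_event M mu t = {\<omega> \<in> space (focus_space M mu). Tstat (Xo \<omega>) (hist M \<omega> t) 1 < mu^2 * real t powr (2/3) / 8}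
     \<inter> {\<omega> \<in> space (focus_space M mu). real (Ncount (hist M \<omega> t) 1) \<le> real t powr (2/3) / 2}"
    unfolding bad_event_def by auto
  then show ?thesis using borel_measurable_less[OF T c1] borel_measurable_le[OF N c2] by simp
qed



lemma prob_gauss: "prob_space (gauss mu)"
  unfolding gauss_def by (rule prob_space_normal_density) simp

lemma prob_unif: "prob_space unif01"
  unfolding unif01_def by (rule prob_space_uniform_measure) auto

lemma emeasure_unif01: "0 \<le> q \<Longrightarrow> q \<le> 1 \<Longrightarrow> emeasure unif01 {..<q} = ennreal q"
proof -
  assume q: "0 \<le> q" "q \<le> 1"
  have "{0..<1} \<inter> {..<q} = {0..<q::real}" using q by auto
  then show ?thesis unfolding unif01_def using q by (simp add: divide_ennreal_def)
qed

lemma prob_pmfM: "prob_space (measure_pmf p)"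
  by (rule prob_space_measure_pmf)

lemma prob_focus: "prob_space (focus_space M mu)"
  unfolding focus_space_def
  by (intro prob_space_pair prob_space_PiM prob_gauss prob_unif prob_pmfM) (auto split: prod.split simp: prob_gauss)

lemma emeasure_EJ:
  assumes J: "finite J" and q: "\<And>j. j \<in> J \<Longrightarrow> 0 \<le> q j \<and> q j \<le> 1" and M: "M > 0"
  shows "emeasure (focus_space M mu) {\<omega>. \<forall>j\<in>J. Uo \<omega> j < q j \<and> Ro \<omega> j = 1}
    = (\<Prod>j\<in>J. ennreal (q j / real M))"
proof -
  let ?PX = "PiM UNIV (\<lambda>(m, i). if m = 1 then gauss mu else gauss 0) :: (nat \<times> nat \<Rightarrow> real) measure"
  let ?PU = "PiM UNIV (\<lambda>_::nat. unif01)"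
  let ?PR = "PiM UNIV (\<lambda>_::nat. measure_pmf (pmf_of_set {1..M}))"
  let ?PV = "PiM UNIV (\<lambda>_::nat. unif01)"
  let ?PK = "PiM UNIV (\<lambda>_::nat \<times> nat. unif01)"
  define SU where "SU = prod_emb UNIV (\<lambda>_. unif01) J (PiE J (\<lambda>j. {..<q j}))"
  define SR where "SR = prod_emb UNIV (\<lambda>_. measure_pmf (pmf_of_set {1..M})) J (PiE J (\<lambda>j. {1::nat}))"
  have SU_eq: "SU = {u. \<forall>j\<in>J. u j < q j}"
    unfolding SU_def by (auto simp: prod_emb_iff unif01_def PiE_iff)
  have SR_eq: "SR = {r. \<forall>j\<in>J. r j = 1}"
    unfolding SR_def by (auto simp: prod_emb_iff PiE_iff fun_eq_iff restrict_def) metis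
  have setq: "{\<omega>::sample. \<forall>j\<in>J. Uo \<omega> j < q j \<and> Ro \<omega> j = 1} = space ?PX \<times> (SU \<times> (SR \<times> (space ?PV \<times> space ?PK)))"
    unfolding SU_eq SR_eq by (auto simp: space_PiM unif01_def gauss_def PiE_def extensional_def)
  interpret PU: product_prob_space "\<lambda>_::nat. unif01" UNIV
    by (simp add: product_prob_space_def product_sigma_finite_def prob_unif prob_space_imp_sigma_finite product_prob_space_axioms_def)
  interpret PR: product_prob_space "\<lambda>_::nat. measure_pmf (pmf_of_set {1..M})" UNIV
    by (simp add: product_prob_space_def product_sigma_finite_def prob_pmfM prob_space_imp_sigma_finite product_prob_space_axioms_def)
  have sU: "SU \<in> sets ?PU" unfolding SU_def using J by (rule sets_PiM_I) (auto simp: unif01_def)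
  have sR: "SR \<in> sets ?PR" unfolding SR_def using J by (rule sets_PiM_I) auto
  have eU: "emeasure ?PU SU = (\<Prod>j\<in>J. ennreal (q j))"
    unfolding SU_def using J q by (subst PU.emeasure_PiM_emb) (auto simp: emeasure_unif01 intro!: prod.cong)
  have e1: "emeasure (measure_pmf (pmf_of_set {Suc 0..M})) {Suc 0} = ennreal (1 / real M)"
    using M by (simp add: emeasure_pmf_single)
  have eR: "emeasure ?PR SR = (\<Prod>j\<in>J. ennreal (1 / real M))"
    unfolding SR_def using J M by (subst PR.emeasure_PiM_emb) (auto simp: e1 intro!: prod.cong)
  have pX: "prob_space ?PX" by (intro prob_space_PiM) (auto split: prod.split simp: prob_gauss)
  have pU: "prob_space ?PU" by (intro prob_space_PiM prob_unif)
  have pR: "prob_space ?PR" by (intro prob_space_PiM prob_pmfM)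
  have pV: "prob_space ?PV" by (intro prob_space_PiM prob_unif)
  have pK: "prob_space ?PK" by (intro prob_space_PiM prob_unif)
  have pVK: "prob_space (?PV \<Otimes>\<^sub>M ?PK)" using pV pK by (rule prob_space_pair)
  have pRVK: "prob_space (?PR \<Otimes>\<^sub>M (?PV \<Otimes>\<^sub>M ?PK))" using pR pVK by (rule prob_space_pair)
  have pURVK: "prob_space (?PU \<Otimes>\<^sub>M (?PR \<Otimes>\<^sub>M (?PV \<Otimes>\<^sub>M ?PK)))" using pU pRVK by (rule prob_space_pair)
  have "emeasure (focus_space M mu) {\<omega>. \<forall>j\<in>J. Uo \<omega> j < q j \<and> Ro \<omega> j = 1}
     = emeasure ?PX (space ?PX) * (emeasure ?PU SU * (emeasure ?PR SR * emeasure (?PV \<Otimes>\<^sub>M ?PK) (space ?PV \<times> space ?PK)))"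
  proof -
    have s1: "SR \<times> (space ?PV \<times> space ?PK) \<in> sets (?PR \<Otimes>\<^sub>M (?PV \<Otimes>\<^sub>M ?PK))"
      by (intro pair_measureI sR sets.top)
    have s2: "SU \<times> (SR \<times> (space ?PV \<times> space ?PK)) \<in> sets (?PU \<Otimes>\<^sub>M (?PR \<Otimes>\<^sub>M (?PV \<Otimes>\<^sub>M ?PK)))"
      by (intro pair_measureI sU s1)
    have "emeasure (?PX \<Otimes>\<^sub>M (?PU \<Otimes>\<^sub>M (?PR \<Otimes>\<^sub>M (?PV \<Otimes>\<^sub>M ?PK)))) (space ?PX \<times> (SU \<times> (SR \<times> (space ?PV \<times> space ?PK))))
       = emeasure ?PX (space ?PX) * emeasure (?PU \<Otimes>\<^sub>M (?PR \<Otimes>\<^sub>M (?PV \<Otimes>\<^sub>M ?PK))) (SU \<times> (SR \<times> (space ?PV \<times> space ?PK)))"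
      by (rule sigma_finite_measure.emeasure_pair_measure_Times[OF prob_space_imp_sigma_finite[OF pURVK] sets.top s2])
    also have "emeasure (?PU \<Otimes>\<^sub>M (?PR \<Otimes>\<^sub>M (?PV \<Otimes>\<^sub>M ?PK))) (SU \<times> (SR \<times> (space ?PV \<times> space ?PK)))
       = emeasure ?PU SU * emeasure (?PR \<Otimes>\<^sub>M (?PV \<Otimes>\<^sub>M ?PK)) (SR \<times> (space ?PV \<times> space ?PK))"
      by (rule sigma_finite_measure.emeasure_pair_measure_Times[OF prob_space_imp_sigma_finite[OF pRVK] sU s1])
    also have "emeasure (?PR \<Otimes>\<^sub>M (?PV \<Otimes>\<^sub>M ?PK)) (SR \<times> (space ?PV \<times> space ?PK))
       = emeasure ?PR SR * emeasure (?PV \<Otimes>\<^sub>M ?PK) (space ?PV \<times> space ?PK)"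
      by (rule sigma_finite_measure.emeasure_pair_measure_Times[OF prob_space_imp_sigma_finite[OF pVK] sR])
        (simp add: space_pair_measure[symmetric])
    finally show ?thesis unfolding setq focus_space_def .
  qed
  also have "\<dots> = emeasure ?PU SU * emeasure ?PR SR"
    using prob_space.emeasure_space_1[OF pX] prob_space.emeasure_space_1[OF pVK]
    by (simp add: space_pair_measure)
  also have "\<dots> = (\<Prod>j\<in>J. ennreal (q j / real M))"
    unfolding eU eR prod.distrib[symmetric] using q M
    by (intro prod.cong refl) (simp add: ennreal_mult[symmetric] divide_inverse)
  finally show ?thesis .
qed



lemma (in prob_space) indep_indicators:
  assumes ind: "indep_events A I"
  shows "indep_vars (\<lambda>_. borel) (\<lambda>i x. indicator (A i) x :: real) I"
proof -
  have ev: "\<And>i. i \<in> I \<Longrightarrow> A i \<in> events" using ind unfolding indep_events_def by auto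
  have "indep_sets (\<lambda>i. {A i}) I" using ind unfolding indep_events_def_alt .
  then have s: "indep_sets (\<lambda>i. sigma_sets (space M) {A i}) I"
    by (rule indep_sets_sigma) (auto simp: Int_stable_def)
  show ?thesis unfolding indep_vars_def2
  proof (intro conjI ballI)
    fix i assume "i \<in> I"
    then show "random_variable borel (\<lambda>x. indicator (A i) x :: real)"
      using ev by simp
  next
    show "indep_sets (\<lambda>i. {(\<lambda>x. indicator (A i) x :: real) -` B \<inter> space M |B. B \<in> sets borel}) I"
    proof (rule indep_sets_mono_sets[OF s])
      fix i assume i: "i \<in> I"
      have sub: "A i \<subseteq> space M" using ev[OF i] sets.sets_into_space by auto
      show "{(\<lambda>x. indicator (A i) x :: real) -` B \<inter> space M |B. B \<in> sets borel} \<subseteq> sigma_sets (space M) {A i}"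
      proof safe
        fix B :: "real set"
        have "(\<lambda>x. indicator (A i) x :: real) -` B \<inter> space M =
          (if (1::real) \<in> B then (if (0::real) \<in> B then space M else A i) else (if (0::real) \<in> B then space M - A i else {}))"
          using sub by (auto simp: indicator_def of_bool_def split: if_splits)
        then show "(\<lambda>x. indicator (A i) x :: real) -` B \<inter> space M \<in> sigma_sets (space M) {A i}"
          by (auto intro: sigma_sets.Basic sigma_sets.Compl sigma_sets.Empty sigma_sets_top)
      qed
    qed
  qed
qed

definition qq :: "nat \<Rightarrow> nat \<Rightarrow> real" where
  "qq M s = min 1 (real M / real s powr (1/3))"

definition EE :: "nat \<Rightarrow> nat \<Rightarrow> sample set" where
  "EE M s = {\<omega>. Uo \<omega> s < qq M s \<and> Ro \<omega> s = 1}"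

lemma qq_le_eps: "s \<ge> 1 \<Longrightarrow> qq M s \<le> eps M s nu"
proof -
  assume s: "s \<ge> 1"
  define d where "d = max 1 (real s - real nu)"
  have d1: "1 \<le> d" and ds: "d \<le> real s" using s by (auto simp: d_def)
  have "d powr (1/3) \<le> real s powr (1/3)" using d1 ds by (intro powr_mono2) auto
  moreover have "0 < d powr (1/3)" using d1 by simp
  moreover have "0 < real s powr (1/3)" using s by simp
  ultimately have "real M / real s powr (1/3) \<le> real M / d powr (1/3)"
    by (intro divide_left_mono) (auto intro: mult_pos_pos)
  then show ?thesis unfolding qq_def eps_def d_def[symmetric] by linarith
qed

lemma Ncount_snoc: "Ncount (h @ [a]) m = Ncount h m + (if a = m then 1 else 0)"
  by (simp add: Ncount_def)

lemma count_ge: "(\<Sum>s\<in>{1..t}. indicator (EE M s) \<omega> :: real) \<le> real (Ncount (hist M \<omega> t) 1)"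
proof (induction t)
  case 0 then show ?case by simp
next
  case (Suc t)
  have ins: "{1..Suc t} = insert (Suc t) {1..t}" by auto
  define a where "a = (if Uo \<omega> (Suc t) < eps M (Suc t) (nuhat M (Xo \<omega>) (VMo \<omega>) (VKo \<omega>) (hist M \<omega> t))
             then Ro \<omega> (Suc t) else Mhat M (Xo \<omega>) (VMo \<omega>) (hist M \<omega> t))"
  have h: "hist M \<omega> (Suc t) = hist M \<omega> t @ [a]" unfolding a_def hist_Suc' Let_def by simp
  have key: "indicator (EE M (Suc t)) \<omega> \<le> (if a = 1 then 1 else (0::real))"
  proof (cases "\<omega> \<in> EE M (Suc t)")
    case True
    then have "Uo \<omega> (Suc t) < eps M (Suc t) (nuhat M (Xo \<omega>) (VMo \<omega>) (VKo \<omega>) (hist M \<omega> t))" "Ro \<omega> (Suc t) = 1"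
      using qq_le_eps[of "Suc t" M] unfolding EE_def by (auto intro: less_le_trans)
    then show ?thesis unfolding a_def by simp
  qed simp
  have n: "real (Ncount (hist M \<omega> (Suc t)) 1) = real (Ncount (hist M \<omega> t) 1) + (if a = 1 then 1 else 0)"
    unfolding h Ncount_snoc by simp
  have "(\<Sum>s\<in>{1..Suc t}. indicator (EE M s) \<omega> :: real) = indicator (EE M (Suc t)) \<omega> + (\<Sum>s\<in>{1..t}. indicator (EE M s) \<omega>)"
    unfolding ins by (subst sum.insert) auto
  then show ?case using Suc.IH key n by linarith
qed



lemma powr_pow': "0 < x \<Longrightarrow> (x powr r) ^ n = x powr (r * real n)"
  by (subst powr_realpow[symmetric]) (auto simp: powr_powr)


lemma term_bound:
  fixes s :: real assumes s: "s \<ge> 1"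
  shows "3/2 * ((s+1) powr (2/3) - s powr (2/3)) \<le> 1 / s powr (1/3)"
proof -
  define a where "a = s powr (1/3)"
  define b where "b = (s+1) powr (1/3)"
  have a0: "a > 0" using s by (simp add: a_def)
  have ab: "a \<le> b" unfolding a_def b_def using s by (intro powr_mono2) auto
  have a3: "a^3 = s" unfolding a_def using s by (subst powr_pow') auto
  have b3: "b^3 = s + 1" unfolding b_def using s by (subst powr_pow') auto
  have a2: "s powr (2/3) = a^2" unfolding a_def using s by (subst powr_pow') auto
  have b2: "(s+1) powr (2/3) = b^2" unfolding b_def using s by (subst powr_pow') auto
  have id: "2 - 3*a*(b^2 - a^2) = (b-a)^2 * (2*b + a)"
  proof -
    have "2 = 2*(b^3 - a^3)" using a3 b3 by simp
    moreover have "2*(b^3 - a^3) - 3*a*(b^2 - a^2) = (b-a)^2 * (2*b + a)" by algebra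
    ultimately show ?thesis by simp
  qed
  have "0 \<le> (b-a)^2 * (2*b + a)" using a0 ab by simp
  then have "3*a*(b^2 - a^2) \<le> 2" using id by linarith
  then have "3/2 * (b^2 - a^2) \<le> 1 / a" using a0 by (simp add: le_divide_eq algebra_simps)
  then show ?thesis unfolding a2 b2 a_def[symmetric] .
qed

lemma sum_bound:
  fixes m :: nat assumes m: "m \<ge> 1"
  shows "(\<Sum>s\<in>{m..<m+k}. 1 / real s powr (1/3)) \<ge> 3/2 * (real (m+k) powr (2/3) - real m powr (2/3))"
proof (induction k)
  case 0 then show ?case by simp
next
  case (Suc k)
  have "{m..<m + Suc k} = insert (m+k) {m..<m+k}" by auto
  then have eq: "(\<Sum>s\<in>{m..<m+Suc k}. 1 / real s powr (1/3)) = 1 / real (m+k) powr (1/3) + (\<Sum>s\<in>{m..<m+k}. 1 / real s powr (1/3))"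
    by simp
  have "3/2 * ((real (m+k)+1) powr (2/3) - real (m+k) powr (2/3)) \<le> 1 / real (m+k) powr (1/3)"
    using m by (intro term_bound) simp
  then show ?case unfolding eq using Suc.IH by (simp add: algebra_simps)
qed

lemma cube_root_nat: "real (M^3) powr (1/3) = real M"
proof -
  define y where "y = real (M^3) powr (1/3)"
  have "y^3 = real (M^3)"
  proof (cases "M = 0")
    case True then show ?thesis by (simp add: y_def)
  next
    case False then show ?thesis unfolding y_def by (subst powr_pow') auto
  qed
  then have "y^3 = real M ^ 3" by simp
  moreover have "y \<ge> 0" by (simp add: y_def)
  ultimately have "y = real M" by (rule power_eq_imp_eq_base) auto
  then show ?thesis by (simp add: y_def)
qed

lemma mu_bound:
  fixes M t :: nat
  assumes M: "M \<ge> 2" and t: "t \<ge> M^3 + 1"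
  shows "(\<Sum>s\<in>{1..t}. min 1 (real M / real s powr (1/3)) / real M)
     \<ge> 3/2 * real t powr (2/3) + real M^2 - 3/2 * (real M^3 + 1) powr (2/3)"
proof -
  define f where "f = (\<lambda>s::nat. min 1 (real M / real s powr (1/3)) / real M)"
  define m where "m = M^3 + 1"
  define k where "k = t + 1 - m"
  have mk: "m + k = t + 1" using t unfolding m_def k_def by simp
  have m1: "m \<ge> 1" unfolding m_def by simp
  have split: "sum f {1..t} = sum f {1..<m} + sum f {m..<m+k}"
    unfolding mk using t m1 by (subst sum.atLeastLessThan_concat) (auto simp: m_def atLeastLessThanSuc_atLeastAtMost)
  have p1: "sum f {1..<m} = real M ^ 2"
  proof -
    have "f s = 1 / real M" if s: "s \<in> {1..<m}" for s
    proof -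
      have "s \<le> M^3" using s unfolding m_def by auto
      then have "real s powr (1/3) \<le> real (M^3) powr (1/3)" by (intro powr_mono2) auto
      then have le: "real s powr (1/3) \<le> real M" using cube_root_nat by simp
      have pos: "real s powr (1/3) > 0" using s by simp
      have "1 \<le> real M / real s powr (1/3)" using le pos by (simp add: le_divide_eq)
      then show ?thesis unfolding f_def by simp
    qed
    then have "sum f {1..<m} = (\<Sum>s\<in>{1..<m}. 1 / real M)" by (intro sum.cong) auto
    also have "\<dots> = real (M^3) / real M" unfolding m_def by simp
    also have "\<dots> = real M ^ 2" using M by (simp add: power3_eq_cube power2_eq_square)
    finally show ?thesis .
  qed
  have p2: "sum f {m..<m+k} = (\<Sum>s\<in>{m..<m+k}. 1 / real s powr (1/3))"
  proof (intro sum.cong refl)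
    fix s assume s: "s \<in> {m..<m+k}"
    have "M^3 \<le> s" using s unfolding m_def by auto
    then have "real (M^3) powr (1/3) \<le> real s powr (1/3)" by (intro powr_mono2) auto
    then have le: "real M \<le> real s powr (1/3)" using cube_root_nat by simp
    have pos: "real s powr (1/3) > 0" using s m1 by simp
    have "real M / real s powr (1/3) \<le> 1" using le pos by (simp add: divide_le_eq)
    then show "f s = 1 / real s powr (1/3)" unfolding f_def using M by simp
  qed
  have p3: "(\<Sum>s\<in>{m..<m+k}. 1 / real s powr (1/3)) \<ge> 3/2 * (real (m+k) powr (2/3) - real m powr (2/3))"
    by (rule sum_bound[OF m1])
  have "real t powr (2/3) \<le> real (m+k) powr (2/3)" unfolding mk by (intro powr_mono2) auto
  moreover have "real m = real M ^ 3 + 1" unfolding m_def by simp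
  ultimately show ?thesis using split p1 p2 p3 unfolding f_def[symmetric] by simp
qed

lemma final_bound:
  fixes M t :: nat and mv :: real
  assumes M: "M \<ge> 2" and t: "real t \<ge> real M^3 + 1"
    and mv: "mv \<ge> 3/2 * real t powr (2/3) + real M^2 - 3/2 * (real M^3 + 1) powr (2/3)"
  shows "mv - real t powr (2/3) / 2 \<ge> 0"
    and "exp (-2 * (mv - real t powr (2/3) / 2)^2 / real t)
        \<le> exp (- 2 * (real t powr (1/6)
                 - (1 / sqrt (real t)) * (3 * (real M ^ 3 + 1) powr (2/3) / 2 - real M ^ 2))^2)"
proof -
  define K where "K = (real M^3 + 1) powr (2/3)"
  define T where "T = real t powr (2/3)"
  define c where "c = 3 * K / 2 - real M^2"
  have "0 \<le> real M^3" by simp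
  then have pp: "0 < real M^3 + 1" by linarith
  have t0: "real t > 0" using t pp by linarith
  have K0: "K \<ge> 0" unfolding K_def by simp
  have "K^3 = (real M^3+1) powr (2/3 * real 3)" unfolding K_def using pp by (rule powr_pow')
  also have "\<dots> = (real M^3+1) powr (real 2)" by simp
  also have "\<dots> = (real M^3+1)^2" using pp by (rule powr_realpow)
  finally have K3: "K^3 = (real M^3 + 1)^2" .
  have "real M^3 + 1 \<le> 2 * real M^3"
  proof -
    have "1 \<le> real M" using M by simp
    then have "1 \<le> real M^3" by (rule one_le_power)
    then show ?thesis by linarith
  qed
  then have "(real M^3 + 1)^2 \<le> (2 * real M^3)^2" by (intro power_mono) auto
  also have "\<dots> \<le> (2 * real M^2)^3" by (simp add: power_mult_distrib power_mult[symmetric])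
  finally have "K^3 \<le> (2 * real M^2)^3" using K3 by simp
  then have K2: "K \<le> 2 * real M^2"
  proof (rule contrapos_pp)
    assume "\<not> K \<le> 2 * real M^2"
    then have "(2 * real M^2)^3 < K^3" by (intro power_strict_mono) auto
    then show "\<not> K^3 \<le> (2 * real M^2)^3" by linarith
  qed
  have TK: "K \<le> T" unfolding K_def T_def using t by (intro powr_mono2) auto
  have Tc: "T - c \<ge> 0" unfolding c_def using TK K2 by simp
  have eps: "mv - T / 2 \<ge> T - c" using mv unfolding T_def c_def K_def by simp
  then show "mv - real t powr (2/3) / 2 \<ge> 0" using Tc unfolding T_def by simp
  have sq: "sqrt (real t) = real t powr (1/2)" using t0 by (simp add: powr_half_sqrt)
  have "real t powr (1/6) * sqrt (real t) = T"
    unfolding sq T_def by (simp add: powr_add[symmetric])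
  then have "real t powr (1/6) - (1 / sqrt (real t)) * c = (T - c) / sqrt (real t)"
    using t0 by (simp add: field_simps)
  then have e1: "(real t powr (1/6) - (1 / sqrt (real t)) * c)^2 = (T - c)^2 / real t"
    using t0 by (simp add: power_divide)
  have "(T - c)^2 \<le> (mv - T/2)^2" using eps Tc by (intro power_mono) auto
  then have "-2 * (mv - T/2)^2 / real t \<le> -2 * ((T - c)^2 / real t)"
    using t0 by (simp add: divide_right_mono)
  then have fin: "exp (-2 * (mv - T/2)^2 / real t) \<le> exp (-2 * (real t powr (1/6) - (1 / sqrt (real t)) * c)^2)"
    unfolding e1 by simp
  then show "exp (-2 * (mv - real t powr (2/3) / 2)^2 / real t)
        \<le> exp (- 2 * (real t powr (1/6)
                 - (1 / sqrt (real t)) * (3 * (real M ^ 3 + 1) powr (2/3) / 2 - real M ^ 2))^2)"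
    unfolding c_def K_def T_def .
qed


lemma prob_EJ:
  assumes J: "finite J" and M: "M > 0"
  shows "measure (focus_space M mu) {\<omega>. \<forall>j\<in>J. Uo \<omega> j < qq M j \<and> Ro \<omega> j = 1} = (\<Prod>j\<in>J. qq M j / real M)"
proof -
  have q: "0 \<le> qq M j \<and> qq M j \<le> 1" for j unfolding qq_def by simp
  have "emeasure (focus_space M mu) {\<omega>. \<forall>j\<in>J. Uo \<omega> j < qq M j \<and> Ro \<omega> j = 1} = ennreal (\<Prod>j\<in>J. qq M j / real M)"
    using emeasure_EJ[OF J _ M, of "qq M" mu] q by (simp add: prod_ennreal)
  then show ?thesis unfolding measure_def using q by (simp add: prod_nonneg)
qed

lemma EE_sets[measurable]: "EE M s \<in> sets (focus_space M mu)"
proof -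
  have "EE M s = {\<omega> \<in> space (focus_space M mu). Uo \<omega> s < qq M s \<and> Ro \<omega> s = 1}"
    unfolding EE_def space_focus by simp
  also have "\<dots> \<in> sets (focus_space M mu)" by measurable
  finally show ?thesis .
qed

lemma prob_EE: "M > 0 \<Longrightarrow> measure (focus_space M mu) (EE M s) = qq M s / real M"
  using prob_EJ[of "{s}" M mu] unfolding EE_def by simp

lemma indep_EE: "M > 0 \<Longrightarrow> prob_space.indep_events (focus_space M mu) (EE M) I"
proof -
  assume M: "M > 0"
  interpret prob_space "focus_space M mu" by (rule prob_focus)
  show ?thesis
  proof (rule indep_eventsI)
    fix i show "EE M i \<in> events" by (rule EE_sets)
  next
    fix J assume J: "J \<subseteq> I" "finite J" "J \<noteq> {}"
    have "(\<Inter>i\<in>J. EE M i) = {\<omega>. \<forall>j\<in>J. Uo \<omega> j < qq M j \<and> Ro \<omega> j = 1}"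
      using J unfolding EE_def by auto
    then show "prob (\<Inter>i\<in>J. EE M i) = (\<Prod>i\<in>J. prob (EE M i))"
      using prob_EJ[OF J(2) M] prob_EE[OF M] by simp
  qed
qed

theorem lemma2:
  fixes M :: nat and mu :: real and t :: nat
  assumes "M > 1" and "mu \<noteq> 0"
  shows "bad_event M mu t \<in> sets (focus_space M mu)
    \<and> (real t \<ge> real M ^ 3 + 1 \<longrightarrow>
         measure (focus_space M mu) (bad_event M mu t)
           \<le> exp (- 2 * (real t powr (1/6)
                 - (1 / sqrt (real t)) * (3 * (real M ^ 3 + 1) powr (2/3) / 2 - real M ^ 2))^2))
    \<and> (t = 0 \<longrightarrow> measure (focus_space M mu) (bad_event M mu t) = 0)"
proof (intro conjI impI)
  show "bad_event M mu t \<in> sets (focus_space M mu)" by (rule bad_event_sets)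
next
  assume "t = 0"
  then have "bad_event M mu t = {}" unfolding bad_event_def by (simp add: Tstat_def Ncount_def)
  then show "measure (focus_space M mu) (bad_event M mu t) = 0" by simp
next
  assume tM: "real t \<ge> real M ^ 3 + 1"
  have M0: "M > 0" and M2: "M \<ge> 2" using assms by auto
  have "real (M^3 + 1) \<le> real t" using tM by simp
  then have tM': "M^3 + 1 \<le> t" by (simp only: of_nat_le_iff)
  then have t1: "t \<ge> 1" by simp
  interpret P: prob_space "focus_space M mu" by (rule prob_focus)
  define mv where "mv = (\<Sum>s\<in>{1..t}. P.expectation (\<lambda>\<omega>. indicator (EE M s) \<omega> :: real))"
  interpret H: Hoeffding_ineq "focus_space M mu" "{1..t}" "\<lambda>s \<omega>. indicator (EE M s) \<omega> :: real" "\<lambda>_. 0" "\<lambda>_. 1" mv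
  proof unfold_locales
    show "finite {1..t}" by simp
    show "P.indep_vars (\<lambda>_. borel) (\<lambda>s \<omega>. indicator (EE M s) \<omega> :: real) {1..t}"
      by (rule P.indep_indicators[OF indep_EE[OF M0]])
    fix i show "AE x in focus_space M mu. indicator (EE M i) x \<in> {0..1::real}"
      by (intro AE_I2) (simp add: indicator_def)
  qed (simp add: mv_def)
  have mv_eq: "mv = (\<Sum>s\<in>{1..t}. min 1 (real M / real s powr (1/3)) / real M)"
    unfolding mv_def
  proof (intro sum.cong refl)
    fix s
    have "P.expectation (\<lambda>\<omega>. indicator (EE M s) \<omega> :: real) = measure (focus_space M mu) (EE M s)"
      using EE_sets[of M s mu] by (simp add: space_focus)
    then show "P.expectation (\<lambda>\<omega>. indicator (EE M s) \<omega> :: real) = min 1 (real M / real s powr (1/3)) / real M"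
      using prob_EE[OF M0] by (simp add: qq_def)
  qed
  have mvb: "mv \<ge> 3/2 * real t powr (2/3) + real M^2 - 3/2 * (real M^3 + 1) powr (2/3)"
    unfolding mv_eq by (rule mu_bound[OF M2 tM'])
  note fb = final_bound[OF M2 tM mvb]
  define e where "e = mv - real t powr (2/3) / 2"
  have e0: "e \<ge> 0" using fb(1) unfolding e_def .
  have sq: "(\<Sum>i\<in>{1..t}. ((1::real) - 0)^2) = real t" by simp
  have H1: "P.prob {x \<in> space (focus_space M mu). (\<Sum>i\<in>{1..t}. indicator (EE M i) x :: real) \<le> mv - e}
      \<le> exp (-2 * e^2 / real t)"
    using H.Hoeffding_ineq_le[OF e0] t1 unfolding sq by simp
  have sub: "bad_event M mu t \<subseteq> {x \<in> space (focus_space M mu). (\<Sum>i\<in>{1..t}. indicator (EE M i) x :: real) \<le> mv - e}"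
  proof
    fix x assume x: "x \<in> bad_event M mu t"
    then have "real (Ncount (hist M x t) 1) \<le> real t powr (2/3) / 2" unfolding bad_event_def by simp
    moreover have "(\<Sum>s\<in>{1..t}. indicator (EE M s) x :: real) \<le> real (Ncount (hist M x t) 1)" by (rule count_ge)
    ultimately show "x \<in> {x \<in> space (focus_space M mu). (\<Sum>i\<in>{1..t}. indicator (EE M i) x :: real) \<le> mv - e}"
      unfolding e_def by (simp add: space_focus)
  qed
  have meas: "{x \<in> space (focus_space M mu). (\<Sum>i\<in>{1..t}. indicator (EE M i) x :: real) \<le> mv - e} \<in> sets (focus_space M mu)"
    by measurable
  have "measure (focus_space M mu) (bad_event M mu t) \<le> P.prob {x \<in> space (focus_space M mu). (\<Sum>i\<in>{1..t}. indicator (EE M i) x :: real) \<le> mv - e}"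
    by (rule P.finite_measure_mono[OF sub meas])
  also have "\<dots> \<le> exp (-2 * e^2 / real t)" by (rule H1)
  also have "\<dots> \<le> exp (- 2 * (real t powr (1/6)
                 - (1 / sqrt (real t)) * (3 * (real M ^ 3 + 1) powr (2/3) / 2 - real M ^ 2))^2)"
    using fb(2) unfolding e_def .
  finally show "measure (focus_space M mu) (bad_event M mu t)
           \<le> exp (- 2 * (real t powr (1/6)
                 - (1 / sqrt (real t)) * (3 * (real M ^ 3 + 1) powr (2/3) / 2 - real M ^ 2))^2)" .
qed

end
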